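(* Let $T>0$ and let $F,G:[0,T]\to\mathbb{R}$ be continuously differentiable functions with $F(0)=0$ and $F(t)>0$ for $t\in(0,T]$. For $\varepsilon>0$ and $t\in(0,T]$ put $$N_\varepsilon(t)=\int_0^t\exp\Big\{-\frac1\varepsilon\int_s^tF(v)\,dv\Big\}G(s)\,ds.$$ Then for any $t\in(0,T]$, as $\varepsilon\to0$, $$N_\varepsilon(t)=\varepsilon\,\frac{G(t)}{F(t)}\big(1+O(\varepsilon)\big).$$ *)

theory Defs
  imports "HOL-Analysis.Analysis" "HOL-Library.Landau_Symbols"
begin

definition C1_on :: "(real \<Rightarrow> real) \<Rightarrow> real set \<Rightarrow> bool" where
  "C1_on f S \<longleftrightarrow> (\<exists>f'. (\<forall>x\<in>S. (f has_real_derivative f' x) (at x within S))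
                        \<and> continuous_on S f')"

definition N_eps :: "(real \<Rightarrow> real) \<Rightarrow> (real \<Rightarrow> real) \<Rightarrow> real \<Rightarrow> real \<Rightarrow> real" where
  "N_eps F G \<epsilon> t = integral {0..t} (\<lambda>s. exp (- (1/\<epsilon>) * integral {s..t} F) * G s)"

end

theory Submission
  imports Defs
begin

lemma exp_neg_le: fixes c e :: real assumes "c>0" "e>0" shows "exp (-(c/e)) \<le> 4*e^2/c^2"
proof -
  have "c/(2*e) \<le> exp(c/(2*e))" using exp_ge_add_one_self[of "c/(2*e)"] by linarith
  hence "(c/(2*e))^2 \<le> exp(c/(2*e))^2" using assms by (intro power_mono) auto
  also have "\<dots> = exp (c/e)" by (simp add: exp_double[symmetric])
  finally have h: "c^2/(4*e^2) \<le> exp(c/e)" by (simp add: power_divide power_mult_distrib)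
  have "exp (-(c/e)) = 1/exp(c/e)" by (simp add: exp_minus field_simps)
  also have "\<dots> \<le> 1/(c^2/(4*e^2))" using h assms by (intro divide_left_mono) auto
  also have "\<dots> = 4*e^2/c^2" by simp
  finally show ?thesis .
qed

lemma exp_int_bound:
  fixes m e d t :: real assumes "m>0" "e>0" "d\<le>t"
  shows "integral {d..t} (\<lambda>s. exp (-(m/e)*(t-s))) \<le> e/m"
proof -
  let ?g = "\<lambda>s. (e/m) * exp (-(m/e)*(t-s))"
  have "((\<lambda>s. exp (-(m/e)*(t-s))) has_integral ?g t - ?g d) {d..t}"
  proof (rule fundamental_theorem_of_calculus[OF assms(3)])
    fix x assume "x \<in> {d..t}"
    have "(?g has_real_derivative (e/m) * (exp (-(m/e)*(t-x)) * (-(m/e)*(0-1)))) (at x within {d..t})"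
      by (intro derivative_eq_intros) auto
    thus "(?g has_vector_derivative exp (-(m/e)*(t-x))) (at x within {d..t})"
      using assms by (simp add: has_real_derivative_iff_has_vector_derivative[symmetric])
  qed
  hence "integral {d..t} (\<lambda>s. exp (-(m/e)*(t-s))) = ?g t - ?g d" by (rule integral_unique)
  also have "\<dots> \<le> e/m" using assms by simp
  finally show ?thesis .
qed

lemma key:
  fixes F G F' G' :: "real \<Rightarrow> real" and t :: real
  assumes t: "t > 0"
    and dF: "\<And>s. s \<in> {0..t} \<Longrightarrow> (F has_real_derivative F' s) (at s within {0..t})"
    and dG: "\<And>s. s \<in> {0..t} \<Longrightarrow> (G has_real_derivative G' s) (at s within {0..t})"
    and cF': "continuous_on {0..t} F'" and cG': "continuous_on {0..t} G'"
    and nn: "\<And>s. s \<in> {0..t} \<Longrightarrow> F s \<ge> 0"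
    and pos: "\<And>s. s \<in> {0<..t} \<Longrightarrow> F s > 0"
  shows "\<exists>K. \<forall>e. 0 < e \<and> e \<le> 1 \<longrightarrow>
     \<bar>integral {0..t} (\<lambda>s. exp (- (1/e) * integral {s..t} F) * G s) - e * G t / F t\<bar> \<le> K * e^2"
proof -
  have cF: "continuous_on {0..t} F" by (rule DERIV_continuous_on[OF dF])
  have cG: "continuous_on {0..t} G" by (rule DERIV_continuous_on[OF dG])
  define d where "d = t/2"
  have d: "0 < d" "d < t" using t by (auto simp: d_def)
  define I where "I x = integral {0..x} F" for x
  define P where "P s = I t - I s" for s
  have intF: "F integrable_on {a..b}" if "0 \<le> a" "b \<le> t" for a b
    using that by (intro integrable_continuous_interval continuous_on_subset[OF cF]) auto
  have P_eq: "P s = integral {s..t} F" if "s \<in> {0..t}" for s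
    using Henstock_Kurzweil_Integration.integral_combine[of 0 s t F] that intF[of 0 t]
    by (auto simp: P_def I_def)
  have dP: "(P has_real_derivative - F s) (at s within {0..t})" if "s \<in> {0..t}" for s
    unfolding P_def I_def
    by (rule derivative_eq_intros integral_has_real_derivative[OF cF that] | simp)+
  have cP: "continuous_on {0..t} P" by (rule DERIV_continuous_on[OF dP])
  have Pt: "P t = 0" by (simp add: P_def)
  obtain x0 where x0: "x0 \<in> {d..t}" "\<And>y. y \<in> {d..t} \<Longrightarrow> F x0 \<le> F y"
    using continuous_attains_inf[of "{d..t}" F] continuous_on_subset[OF cF, of "{d..t}"] d
    by auto
  define m where "m = F x0"
  have m: "m > 0" using pos[of x0] x0 d by (auto simp: m_def)
  have Fm: "F s \<ge> m" if "s \<in> {d..t}" for s using x0 that by (auto simp: m_def)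
  have Pm: "P s \<ge> m * (t - s)" if "s \<in> {d..t}" for s
  proof -
    have "integral {s..t} (\<lambda>_. m) \<le> integral {s..t} F"
      using that d Fm by (intro integral_le intF) auto
    thus ?thesis using that d by (simp add: P_eq content_real mult.commute)
  qed
  define c where "c = m * (t - d)"
  have c: "c > 0" using m d by (simp add: c_def)
  have Pd: "P s \<ge> c" if "s \<in> {0..d}" for s
  proof -
    have "integral {s..d} F + integral {d..t} F = integral {s..t} F"
      using that d by (intro Henstock_Kurzweil_Integration.integral_combine intF) auto
    moreover have "integral {s..d} F \<ge> 0" using that d nn by (intro integral_nonneg intF) auto
    moreover have "P d = integral {d..t} F" using d by (intro P_eq) auto
    moreover have "P s = integral {s..t} F" using d that by (intro P_eq) auto
    ultimately have "P s \<ge> P d" by linarith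
    thus ?thesis using Pm[of d] d by (simp add: c_def)
  qed
  obtain xg where xg: "\<forall>y\<in>{0..t}. \<bar>G y\<bar> \<le> \<bar>G xg\<bar>"
    using continuous_attains_sup[of "{0..t}" "\<lambda>s. \<bar>G s\<bar>"] continuous_on_rabs[OF cG] t by auto
  define MG where "MG = \<bar>G xg\<bar>"
  have MG: "\<bar>G s\<bar> \<le> MG" if "s \<in> {0..t}" for s using xg that by (simp add: MG_def)
  define R where "R s = G s / F s" for s
  define R' where "R' s = (G' s * F s - G s * F' s) / (F s * F s)" for s
  have Fpos: "F s > 0" if "s \<in> {d..t}" for s using Fm[OF that] m by simp
  have dR: "(R has_real_derivative R' s) (at s within {d..t})" if "s \<in> {d..t}" for s
    unfolding R_def R'_def
    using that d Fpos[OF that]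
    by (intro DERIV_divide has_field_derivative_subset[OF dF] has_field_derivative_subset[OF dG]) auto
  have Fnz: "F s \<noteq> 0" if "d \<le> s" "s \<le> t" for s using Fpos[of s] that by simp
  have cR': "continuous_on {d..t} R'"
    unfolding R'_def using d
    by (intro continuous_intros continuous_on_subset[OF cF] continuous_on_subset[OF cG]
          continuous_on_subset[OF cF'] continuous_on_subset[OF cG']) (auto simp: Fnz)
  obtain xb where xb: "\<forall>y\<in>{d..t}. \<bar>R' y\<bar> \<le> \<bar>R' xb\<bar>"
    using continuous_attains_sup[of "{d..t}" "\<lambda>s. \<bar>R' s\<bar>"] continuous_on_rabs[OF cR'] d by auto
  define B where "B = \<bar>R' xb\<bar>"
  have B: "\<bar>R' s\<bar> \<le> B" if "s \<in> {d..t}" for s using xb that by (simp add: B_def)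
  define K where "K = d * MG * 4 / c^2 + \<bar>R d\<bar> * 4 / c^2 + B / m"
  show ?thesis
  proof (intro exI allI impI)
    fix e :: real assume e: "0 < e \<and> e \<le> 1"
    define E where "E s = exp (- (1/e) * P s)" for s
    have cE: "continuous_on {0..t} E" unfolding E_def by (intro continuous_intros cP)
    have intGE: "(\<lambda>s. E s * G s) integrable_on {a..b}" if "0 \<le> a" "b \<le> t" for a b
      using that by (intro integrable_continuous_interval continuous_on_subset[OF continuous_on_mult[OF cE cG]]) auto
    have Ec: "E s \<le> exp (-(c/e))" if "s \<in> {0..d}" for s
      unfolding E_def using Pd[OF that] e by (simp add: divide_right_mono)
    have Em: "E s \<le> exp (-(m/e)*(t-s))" if "s \<in> {d..t}" for s
      unfolding E_def using Pm[OF that] e by (simp add: divide_right_mono)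
    have N_eq: "integral {0..t} (\<lambda>s. exp (- (1/e) * integral {s..t} F) * G s) = integral {0..t} (\<lambda>s. E s * G s)"
      by (intro integral_cong) (simp add: E_def P_eq)
    have split: "integral {0..t} (\<lambda>s. E s * G s) = integral {0..d} (\<lambda>s. E s * G s) + integral {d..t} (\<lambda>s. E s * G s)"
      using d by (intro Henstock_Kurzweil_Integration.integral_combine[symmetric] intGE) auto
    have A: "\<bar>integral {0..d} (\<lambda>s. E s * G s)\<bar> \<le> d * MG * exp (-(c/e))"
    proof -
      have "norm (integral {0..d} (\<lambda>s. E s * G s)) \<le> integral {0..d} (\<lambda>s. MG * exp (-(c/e)))"
      proof (intro integral_norm_bound_integral intGE)
        fix s assume s: "s \<in> {0..d}"
        have "\<bar>E s\<bar> * \<bar>G s\<bar> \<le> exp (-(c/e)) * MG"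
          using s d Ec[OF s] MG[of s] by (intro mult_mono) (auto simp: E_def)
        thus "norm (E s * G s) \<le> MG * exp (-(c/e))" by (simp add: abs_mult mult.commute)
      qed (use d in auto)
      thus ?thesis using d by (simp add: content_real mult_ac)
    qed
    define H where "H s = e * R s * E s" for s
    have dE: "(E has_real_derivative E s * ((1/e) * F s)) (at s within {d..t})" if "s \<in> {d..t}" for s
    proof -
      have dPs: "(P has_real_derivative - F s) (at s within {d..t})"
        by (rule has_field_derivative_subset[OF dP]) (use that d in auto)
      have "((\<lambda>s. -(1/e) * P s) has_real_derivative -(1/e) * - F s) (at s within {d..t})"
        by (rule DERIV_cmult[OF dPs])
      from DERIV_chain2[OF DERIV_exp this] show ?thesis by (simp add: E_def[abs_def])
    qed
    have FTC: "((\<lambda>s. e * R' s * E s + E s * G s) has_integral H t - H d) {d..t}"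
    proof (rule fundamental_theorem_of_calculus)
      fix s assume s: "s \<in> {d..t}"
      have d1: "((\<lambda>s. e * (R s * E s)) has_real_derivative e * (R' s * E s + E s * ((1/e)*F s) * R s)) (at s within {d..t})"
        by (rule DERIV_cmult[OF DERIV_mult[OF dR[OF s] dE[OF s]]])
      have Heq: "H = (\<lambda>s. e * (R s * E s))" by (rule ext) (simp add: H_def mult.assoc)
      have "e * (R' s * E s + E s * ((1/e)*F s) * R s) = e * R' s * E s + E s * G s"
        using e Fpos[OF s] by (simp add: R_def field_simps)
      with d1 Heq show "(H has_vector_derivative e * R' s * E s + E s * G s) (at s within {d..t})"
        by (simp add: has_real_derivative_iff_has_vector_derivative[symmetric])
    qed (use d in auto)
    have intR'E: "(\<lambda>s. e * R' s * E s) integrable_on {d..t}"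
      using d by (intro integrable_continuous_interval continuous_intros cR' continuous_on_subset[OF cE]) auto
    have Beq: "integral {d..t} (\<lambda>s. E s * G s) = H t - H d - integral {d..t} (\<lambda>s. e * R' s * E s)"
    proof -
      have "((\<lambda>s. (e * R' s * E s + E s * G s) - e * R' s * E s) has_integral (H t - H d) - integral {d..t} (\<lambda>s. e * R' s * E s)) {d..t}"
        by (intro has_integral_diff FTC integrable_integral intR'E)
      thus ?thesis by (simp add: integral_unique)
    qed
    have Ht: "H t = e * G t / F t" by (simp add: H_def E_def Pt R_def)
    have Hd: "\<bar>H d\<bar> \<le> \<bar>R d\<bar> * exp (-(c/e))"
    proof -
      have "\<bar>H d\<bar> = e * \<bar>R d\<bar> * E d" using e by (simp add: H_def abs_mult E_def)
      also have "\<dots> \<le> 1 * \<bar>R d\<bar> * exp (-(c/e))"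
        using e Ec[of d] d by (intro mult_mono) (auto simp: E_def)
      finally show ?thesis by simp
    qed
    have C: "\<bar>integral {d..t} (\<lambda>s. e * R' s * E s)\<bar> \<le> e * B * (e/m)"
    proof -
      have "norm (integral {d..t} (\<lambda>s. e * R' s * E s)) \<le> integral {d..t} (\<lambda>s. e * B * exp (-(m/e)*(t-s)))"
      proof (intro integral_norm_bound_integral intR'E)
        fix s assume s: "s \<in> {d..t}"
        have "e * \<bar>R' s\<bar> * \<bar>E s\<bar> \<le> e * B * exp (-(m/e)*(t-s))"
          using e B[OF s] Em[OF s] by (intro mult_mono) (auto simp: E_def)
        thus "norm (e * R' s * E s) \<le> e * B * exp (-(m/e)*(t-s))" using e by (simp add: abs_mult)
      next
        show "(\<lambda>s. e * B * exp (-(m/e)*(t-s))) integrable_on {d..t}"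
          by (intro integrable_continuous_interval continuous_intros)
      qed
      also have "\<dots> = e * B * integral {d..t} (\<lambda>s. exp (-(m/e)*(t-s)))" by simp
      also have "\<dots> \<le> e * B * (e/m)"
      proof -
        have "B \<ge> 0" using B[of d] d by auto
        thus ?thesis using e m d by (intro mult_left_mono exp_int_bound) auto
      qed
      finally show ?thesis by simp
    qed
    have ex: "exp (-(c/e)) \<le> 4*e^2/c^2" using exp_neg_le c e by auto
    have MG0: "MG \<ge> 0" using MG[of 0] t by auto
    have "\<bar>integral {0..t} (\<lambda>s. exp (- (1/e) * integral {s..t} F) * G s) - e * G t / F t\<bar>
        \<le> \<bar>integral {0..d} (\<lambda>s. E s * G s)\<bar> + \<bar>H d\<bar> + \<bar>integral {d..t} (\<lambda>s. e * R' s * E s)\<bar>"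
      using N_eq split Beq Ht by linarith
    also have "\<dots> \<le> d * MG * (4*e^2/c^2) + \<bar>R d\<bar> * (4*e^2/c^2) + e * B * (e/m)"
    proof -
      have "d * MG * exp (-(c/e)) \<le> d * MG * (4*e^2/c^2)" using ex d MG0 by (intro mult_left_mono) auto
      moreover have "\<bar>R d\<bar> * exp (-(c/e)) \<le> \<bar>R d\<bar> * (4*e^2/c^2)" using ex by (intro mult_left_mono) auto
      ultimately show ?thesis using A Hd C by linarith
    qed
    also have "\<dots> = K * e^2" by (simp add: K_def field_simps power2_eq_square)
    finally show "\<bar>integral {0..t} (\<lambda>s. exp (- (1/e) * integral {s..t} F) * G s) - e * G t / F t\<bar> \<le> K * e^2" .
  qed
qed

theorem lemma2:
  fixes F G :: "real \<Rightarrow> real" and T t :: real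
  assumes "T > 0"
    and "C1_on F {0..T}" and "C1_on G {0..T}"
    and "F 0 = 0" and "\<And>s. s \<in> {0<..T} \<Longrightarrow> F s > 0"
    and "t \<in> {0<..T}"
  shows "(\<lambda>\<epsilon>. N_eps F G \<epsilon> t - \<epsilon> * G t / F t) \<in> O[at_right 0](\<lambda>\<epsilon>. \<epsilon> ^ 2)"
proof -
  obtain F' where dF: "\<And>x. x \<in> {0..T} \<Longrightarrow> (F has_real_derivative F' x) (at x within {0..T})"
    and cF': "continuous_on {0..T} F'" using assms(2) unfolding C1_on_def by blast
  obtain G' where dG: "\<And>x. x \<in> {0..T} \<Longrightarrow> (G has_real_derivative G' x) (at x within {0..T})"
    and cG': "continuous_on {0..T} G'" using assms(3) unfolding C1_on_def by blast
  have t: "t > 0" "t \<le> T" using assms(6) by auto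
  have sub: "{0..t} \<subseteq> {0..T}" using t by auto
  obtain K where K: "\<And>e. 0 < e \<and> e \<le> 1 \<Longrightarrow>
     \<bar>integral {0..t} (\<lambda>s. exp (- (1/e) * integral {s..t} F) * G s) - e * G t / F t\<bar> \<le> K * e^2"
  proof -
    have "\<exists>K. \<forall>e. 0 < e \<and> e \<le> 1 \<longrightarrow>
     \<bar>integral {0..t} (\<lambda>s. exp (- (1/e) * integral {s..t} F) * G s) - e * G t / F t\<bar> \<le> K * e^2"
    proof (rule key[OF t(1)])
      fix s :: real assume s: "s \<in> {0..t}"
      show "(F has_real_derivative F' s) (at s within {0..t})"
        using s sub by (intro has_field_derivative_subset[OF dF]) auto
      show "(G has_real_derivative G' s) (at s within {0..t})"
        using s sub by (intro has_field_derivative_subset[OF dG]) auto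
      show "F s \<ge> 0"
      proof (cases "s = 0")
        case True thus ?thesis using assms(4) by simp
      next
        case False thus ?thesis using s t assms(5)[of s] by auto
      qed
    next
      show "continuous_on {0..t} F'" by (rule continuous_on_subset[OF cF' sub])
      show "continuous_on {0..t} G'" by (rule continuous_on_subset[OF cG' sub])
    next
      fix s :: real assume "s \<in> {0<..t}" thus "F s > 0" using t assms(5) by auto
    qed
    thus ?thesis using that by blast
  qed
  show ?thesis
  proof (rule bigoI[where c = K])
    have "eventually (\<lambda>e. 0 < e \<and> e \<le> (1::real)) (at_right 0)"
      unfolding eventually_at_right_field by (intro exI[of _ 1]) auto
    thus "\<forall>\<^sub>F x in at_right 0. norm (N_eps F G x t - x * G t / F t) \<le> K * norm (x ^ 2)"
      by eventually_elim (use K in \<open>auto simp: N_eps_def\<close>)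
  qed
qed

end
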